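(* Let $\alpha\ge0$, $0\le\beta<1$, and let $f=h+\overline{g}\in\mathcal{W}_{\mathcal{H}}^0(\alpha,\beta)$ with $h(z)=z+\sum_{n\ge2}a_nz^n$, $g(z)=\sum_{n\ge2}b_nz^n$. Then for every $n\ge2$: (i) $|a_n|+|b_n|\le\dfrac{2(1-\beta)}{n(1+\alpha(n-1))}$; (ii) $\big||a_n|-|b_n|\big|\le\dfrac{2(1-\beta)}{n(1+\alpha(n-1))}$; (iii) $|a_n|\le\dfrac{2(1-\beta)}{n(1+\alpha(n-1))}$.
   Context: Let $\mathbb{D}=\{z\in\mathbb{C}:|z|<1\}$. $\mathcal{H}^0$ denotes the class of harmonic maps $f=h+\overline{g}$ on $\mathbb{D}$, with $h,g$ analytic in $\mathbb{D}$, $h(z)=z+\sum_{n\ge2}a_nz^n$ and $g(z)=\sum_{n\ge2}b_nz^n$. For $\alpha\ge0$, $0\le\beta<1$, $\mathcal{W}_{\mathcal{H}}^0(\alpha,\beta)$ denotes the class of $f=h+\overline{g}\in\mathcal{H}^0$ such that $\Re\big(h'(z)+\alpha zh''(z)-\beta\big)>|g'(z)+\alpha zg''(z)|$ for all $z\in\mathbb{D}$. *)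

theory Defs
  imports "HOL-Complex_Analysis.Complex_Analysis"
begin

text \<open>The class H^0: harmonic maps f = h + conj g on the unit disk with
  h(z) = z + sum_{n>=2} a_n z^n and g(z) = sum_{n>=2} b_n z^n (power series
  converging on the disk). We represent f by its analytic parts h and g.\<close>

definition H0 :: "(complex \<Rightarrow> complex) \<Rightarrow> (complex \<Rightarrow> complex) \<Rightarrow> bool" where
  "H0 h g \<longleftrightarrow> h holomorphic_on ball 0 1 \<and> g holomorphic_on ball 0 1 \<and>
     h 0 = 0 \<and> deriv h 0 = 1 \<and> g 0 = 0 \<and> deriv g 0 = 0"

definition WH0 :: "real \<Rightarrow> real \<Rightarrow> (complex \<Rightarrow> complex) \<Rightarrow> (complex \<Rightarrow> complex) \<Rightarrow> bool" where
  "WH0 \<alpha> \<beta> h g \<longleftrightarrow> H0 h g \<and>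
     (\<forall>z \<in> ball 0 1.
        Re (deriv h z + of_real \<alpha> * z * deriv (deriv h) z - of_real \<beta>)
          > cmod (deriv g z + of_real \<alpha> * z * deriv (deriv g) z))"

end

theory Submission imports Defs begin

definition ee :: "real \<Rightarrow> complex" where "ee t = exp (2 * of_real pi * \<i> * of_real t)"

lemma norm_ee [simp]: "norm (ee t) = 1"
  by (simp add: ee_def norm_exp_eq_Re)

lemma ee_nz [simp]: "ee t \<noteq> 0"
  by (simp add: ee_def)

lemma cnj_ee: "cnj (ee t) = inverse (ee t)"
proof -
  have "ee t * cnj (ee t) = 1"
    by (metis complex_norm_square mult.commute norm_ee of_real_1 power_one complex_mult_cnj) 
  then show ?thesis by (simp add: field_simps)
qed

lemma circ_conv:
  assumes "(f has_contour_integral I) (circlepath 0 r)"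
  shows "((\<lambda>t. f (of_real r * ee t) * (2 * of_real pi * \<i> * of_real r * ee t)) has_integral I) {0..1}"
proof -
  have "((\<lambda>t. f (circlepath 0 r t) * vector_derivative (circlepath 0 r) (at t within {0..1})) has_integral I) {0..1}"
    using assms by (simp add: has_contour_integral_def)
  then show ?thesis
  proof (subst has_integral_cong)
    fix t :: real assume t: "t \<in> {0..1}"
    have "vector_derivative (circlepath 0 r) (at t within {0..1}) = 2 * pi * \<i> * r * exp(2 * of_real pi * \<i> * t)"
      using t by (intro vector_derivative_circlepath01) auto
    then show "f (of_real r * ee t) * (2 * of_real pi * \<i> * of_real r * ee t) = f (circlepath 0 r t) * vector_derivative (circlepath 0 r) (at t within {0..1})"
      by (simp add: circlepath ee_def)
  qed
qed

lemma coeff_int: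
  assumes holF: "F holomorphic_on ball 0 1" and r: "0 < r" "r < 1"
  shows "((\<lambda>t. F (of_real r * ee t) * cnj (ee t) ^ k) has_integral (of_real r ^ k * ((deriv ^^ k) F 0 / fact k))) {0..1}"
proof -
  have sub: "cball 0 r \<subseteq> ball (0::complex) 1" using r by auto
  have sub2: "ball 0 r \<subseteq> ball (0::complex) 1" using r by auto
  have "((\<lambda>u. F u / (u - 0) ^ (Suc k)) has_contour_integral ((2 * pi * \<i>) / (fact k) * (deriv ^^ k) F 0)) (circlepath 0 r)"
    using r holomorphic_on_subset[OF holF sub] holomorphic_on_subset[OF holF sub2] sub
    by (intro Cauchy_has_contour_integral_higher_derivative_circlepath)
       (auto intro!: holomorphic_on_imp_continuous_on)
  from circ_conv[OF this]
  have "((\<lambda>t. (of_real r ^ k / (2 * pi * \<i>)) * (F (of_real r * ee t) / (of_real r * ee t - 0) ^ Suc k * (2 * of_real pi * \<i> * of_real r * ee t)))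
     has_integral (of_real r ^ k / (2 * pi * \<i>)) * ((2 * pi * \<i>) / (fact k) * (deriv ^^ k) F 0)) {0..1}"
    by (rule has_integral_mult_right)
  moreover have "(of_real r ^ k / (2 * pi * \<i>)) * ((2 * pi * \<i>) / (fact k) * (deriv ^^ k) F 0) = of_real r ^ k * ((deriv ^^ k) F 0 / fact k)"
    by (simp add: field_simps)
  moreover have "(of_real r ^ k / (2 * pi * \<i>)) * (F (of_real r * ee t) / (of_real r * ee t - 0) ^ Suc k * (2 * of_real pi * \<i> * of_real r * ee t))
      = F (of_real r * ee t) * cnj (ee t) ^ k" for t
    using r by (simp add: cnj_ee field_simps power_inverse)
  ultimately show ?thesis by simp
qed

lemma zero_int:
  assumes holF: "F holomorphic_on ball 0 1" and r: "0 < r" "r < 1" and k: "k \<ge> 1"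
  shows "((\<lambda>t. F (of_real r * ee t) * ee t ^ k) has_integral 0) {0..1}"
proof -
  have "((\<lambda>u. F u * u ^ (k - 1)) has_contour_integral 0) (circlepath 0 r)"
    using r by (intro Cauchy_theorem_convex_simple[where S = "ball 0 1"])
      (auto intro!: holomorphic_intros holF simp: path_image_circlepath_nonneg)
  from circ_conv[OF this]
  have "((\<lambda>t. inverse (2 * pi * \<i> * of_real r ^ k) * (F (of_real r * ee t) * (of_real r * ee t) ^ (k - 1) * (2 * of_real pi * \<i> * of_real r * ee t)))
     has_integral inverse (2 * pi * \<i> * of_real r ^ k) * 0) {0..1}"
    by (rule has_integral_mult_right)
  moreover have "inverse (2 * pi * \<i> * of_real r ^ k) * (F (of_real r * ee t) * (of_real r * ee t) ^ (k - 1) * (2 * of_real pi * \<i> * of_real r * ee t))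
     = F (of_real r * ee t) * ee t ^ k" for t
  proof -
    have "(of_real r * ee t) ^ (k - 1) * (of_real r * ee t) = (of_real r * ee t) ^ k"
      using k by (metis Suc_diff_le diff_Suc_1 power_Suc2)
    then show ?thesis using r by (simp add: field_simps power_mult_distrib)
  qed
  ultimately show ?thesis by simp
qed

lemma carath_r:
  assumes holF: "F holomorphic_on ball 0 1" and pos: "\<And>z. z \<in> ball 0 1 \<Longrightarrow> Re (F z) > \<beta>"
    and k: "k \<ge> 1" and r: "0 < r" "r < 1"
  shows "r ^ k * norm ((deriv ^^ k) F 0 / fact k) \<le> 2 * (Re (F 0) - \<beta>)"
proof -
  define c where "c = (deriv ^^ k) F 0 / fact k"
  define \<phi> where "\<phi> = (\<lambda>t. F (of_real r * ee t))"
  have inb: "of_real r * ee t \<in> ball 0 1" for t using r by (simp add: norm_mult)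
  have I1: "((\<lambda>t. \<phi> t * cnj (ee t) ^ k) has_integral (of_real r ^ k * c)) {0..1}"
    unfolding \<phi>_def c_def by (rule coeff_int[OF holF r])
  have I2': "((\<lambda>t. \<phi> t * ee t ^ k) has_integral 0) {0..1}"
    unfolding \<phi>_def by (rule zero_int[OF holF r k])
  have I2: "((\<lambda>t. cnj (\<phi> t) * cnj (ee t) ^ k) has_integral 0) {0..1}"
    using I2' has_integral_cnj[of "\<lambda>t. \<phi> t * ee t ^ k" 0 "{0..1}"] by (simp add: o_def)
  have I3': "((\<lambda>t. (\<lambda>_. 1) (of_real r * ee t) * ee t ^ k) has_integral 0) {0..1}"
    by (rule zero_int[OF _ r k]) auto
  have I3: "((\<lambda>t. cnj (ee t) ^ k) has_integral 0) {0..1}"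
    using I3' has_integral_cnj[of "\<lambda>t. ee t ^ k" 0 "{0..1}"] by (simp add: o_def)
  have I4': "((\<lambda>t. \<phi> t * cnj (ee t) ^ 0) has_integral (of_real r ^ 0 * ((deriv ^^ 0) F 0 / fact 0))) {0..1}"
    unfolding \<phi>_def by (rule coeff_int[OF holF r])
  have I4: "((\<lambda>t. 2 * Re (\<phi> t) - 2 * \<beta>) has_integral (2 * Re (F 0) - 2 * \<beta>)) {0..1}"
  proof -
    have "((\<lambda>t. Re (\<phi> t)) has_integral Re (F 0)) {0..1}"
      using has_integral_Re[of \<phi> "F 0" "{0..1}"] I4' by simp
    from has_integral_mult_right[OF this, of 2]
    have a: "((\<lambda>t. 2 * Re (\<phi> t)) has_integral 2 * Re (F 0)) {0..1}" .
    have b: "((\<lambda>t::real. 2 * \<beta>) has_integral 2 * \<beta>) {0..1}"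
      using has_integral_const_real[of "2*\<beta>" 0 1] by simp
    show ?thesis using has_integral_diff[OF a b] by simp
  qed
  have J: "((\<lambda>t. of_real (2 * Re (\<phi> t) - 2 * \<beta>) * cnj (ee t) ^ k) has_integral (of_real r ^ k * c)) {0..1}"
  proof -
    have "((\<lambda>t. \<phi> t * cnj (ee t) ^ k + cnj (\<phi> t) * cnj (ee t) ^ k - of_real (2 * \<beta>) * cnj (ee t) ^ k)
       has_integral (of_real r ^ k * c + 0 - of_real (2 * \<beta>) * 0)) {0..1}"
      by (intro has_integral_diff has_integral_add I1 I2 has_integral_mult_right I3)
    moreover have "\<phi> t * cnj (ee t) ^ k + cnj (\<phi> t) * cnj (ee t) ^ k - of_real (2 * \<beta>) * cnj (ee t) ^ k
       = of_real (2 * Re (\<phi> t) - 2 * \<beta>) * cnj (ee t) ^ k" for t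
    proof -
      have "\<phi> t * cnj (ee t) ^ k + cnj (\<phi> t) * cnj (ee t) ^ k - of_real (2 * \<beta>) * cnj (ee t) ^ k
         = (\<phi> t + cnj (\<phi> t) - of_real (2 * \<beta>)) * cnj (ee t) ^ k" by (simp only: ring_distribs)
      also have "\<dots> = of_real (2 * Re (\<phi> t) - 2 * \<beta>) * cnj (ee t) ^ k"
        unfolding complex_add_cnj of_real_diff ..
      finally show ?thesis .
    qed
    ultimately show ?thesis by simp
  qed
  have "norm (of_real r ^ k * c) \<le> (2 * Re (F 0) - 2 * \<beta>) \<bullet> (1::real)"
  proof (rule has_integral_norm_bound_integral_component[OF J I4])
    fix t :: real assume "t \<in> {0..1}"
    have "Re (\<phi> t) > \<beta>" unfolding \<phi>_def by (rule pos[OF inb])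
    then show "norm (of_real (2 * Re (\<phi> t) - 2 * \<beta>) * cnj (ee t) ^ k) \<le> (2 * Re (\<phi> t) - 2 * \<beta>) \<bullet> 1"
    proof -
      have "norm (of_real (2 * Re (\<phi> t) - 2 * \<beta>) * cnj (ee t) ^ k) = \<bar>2 * Re (\<phi> t) - 2 * \<beta>\<bar>"
        by (simp only: norm_mult norm_of_real norm_power complex_mod_cnj norm_ee power_one mult_1_right)
      then show ?thesis using \<open>Re (\<phi> t) > \<beta>\<close> by simp
    qed
  qed
  moreover have "norm (of_real r ^ k * c) = r ^ k * norm c"
    using r by (simp only: norm_mult norm_power norm_of_real abs_of_pos)
  ultimately show ?thesis by (simp add: c_def)
qed

lemma carath:
  assumes holF: "F holomorphic_on ball 0 1" and pos: "\<And>z. z \<in> ball 0 1 \<Longrightarrow> Re (F z) > \<beta>"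
    and k: "k \<ge> 1"
  shows "norm ((deriv ^^ k) F 0 / fact k) \<le> 2 * (Re (F 0) - \<beta>)"
proof (rule ccontr)
  define c where "c = norm ((deriv ^^ k) F 0 / fact k)"
  define M where "M = 2 * (Re (F 0) - \<beta>)"
  assume "\<not> ?thesis"
  then have cM: "c > M" by (simp add: c_def M_def)
  have "((\<lambda>r. c * r ^ k) \<longlongrightarrow> c * 1 ^ k) (at_left (1::real))"
    by (intro tendsto_intros)
  then have "eventually (\<lambda>r. c * r ^ k > M) (at_left (1::real))"
    using cM by (intro order_tendstoD(1)) auto
  moreover have "eventually (\<lambda>r. 0 < r \<and> r < 1) (at_left (1::real))"
    by (rule eventually_at_leftI[of 0]) auto
  ultimately have "eventually (\<lambda>r. False) (at_left (1::real))"
  proof eventually_elim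
    case (elim r)
    then show False using carath_r[OF holF pos k, of r] by (simp add: c_def M_def mult.commute)
  qed
  then show False by simp
qed

lemma fps_exp:
  fixes a :: "nat \<Rightarrow> complex" and h :: "complex \<Rightarrow> complex"
  assumes "\<And>z. z \<in> ball 0 1 \<Longrightarrow> (\<lambda>n. a n * z ^ n) sums h z"
  shows "h has_fps_expansion Abs_fps a"
proof -
  have "summable (\<lambda>n. a n * (1/2) ^ n)" using assms[of "1/2"] sums_summable by auto
  then have "conv_radius a \<ge> norm (1/2::complex)" by (rule conv_radius_geI)
  then have cr: "fps_conv_radius (Abs_fps a) > 0"
    by (simp add: fps_conv_radius_def) (meson ereal_less(2) order_less_le_trans zero_less_divide_1_iff zero_less_numeral)
  have ev: "eventually (\<lambda>z. z \<in> ball 0 1) (nhds (0::complex))"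
    by (intro eventually_nhds_in_open) auto
  moreover have "eventually (\<lambda>z. eval_fps (Abs_fps a) z = h z) (nhds 0)"
    using ev
  proof (rule eventually_mono)
    fix z :: complex assume "z \<in> ball 0 1"
    then show "eval_fps (Abs_fps a) z = h z" using sums_unique[OF assms] by (simp add: eval_fps_def)
  qed
  ultimately show ?thesis using cr by (simp add: has_fps_expansion_def)
qed

theorem theorem3p2:
  fixes \<alpha> \<beta> :: real and h g :: "complex \<Rightarrow> complex" and a b :: "nat \<Rightarrow> complex"
  assumes "\<alpha> \<ge> 0" and "0 \<le> \<beta>" and "\<beta> < 1"
    and "WH0 \<alpha> \<beta> h g"
    and "\<And>z. z \<in> ball 0 1 \<Longrightarrow> (\<lambda>n. a n * z ^ n) sums h z"
    and "\<And>z. z \<in> ball 0 1 \<Longrightarrow> (\<lambda>n. b n * z ^ n) sums g z"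
    and "a 0 = 0" and "a 1 = 1" and "b 0 = 0" and "b 1 = 0"
  shows "\<forall>n\<ge>2.
      cmod (a n) + cmod (b n) \<le> 2 * (1 - \<beta>) / (real n * (1 + \<alpha> * (real n - 1))) \<and>
      \<bar>cmod (a n) - cmod (b n)\<bar> \<le> 2 * (1 - \<beta>) / (real n * (1 + \<alpha> * (real n - 1))) \<and>
      cmod (a n) \<le> 2 * (1 - \<beta>) / (real n * (1 + \<alpha> * (real n - 1)))"
proof (intro allI impI)
  fix n :: nat assume "n \<ge> 2"
  then obtain m where n: "n = Suc (Suc m)" by (metis add_2_eq_Suc le_Suc_ex)
  define k where "k = Suc m"
  define A where "A = a n"
  define B where "B = b n"
  have hol: "h holomorphic_on ball 0 1" "g holomorphic_on ball 0 1" and h0: "deriv h 0 = 1" "deriv g 0 = 0"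
    and cond: "\<And>z. z \<in> ball 0 1 \<Longrightarrow> Re (deriv h z + of_real \<alpha> * z * deriv (deriv h) z - of_real \<beta>)
          > cmod (deriv g z + of_real \<alpha> * z * deriv (deriv g) z)"
    using assms(4) by (auto simp: WH0_def H0_def)
  have dh: "deriv h holomorphic_on ball 0 1" "deriv (deriv h) holomorphic_on ball 0 1"
       "deriv g holomorphic_on ball 0 1" "deriv (deriv g) holomorphic_on ball 0 1"
    using hol by (auto intro!: holomorphic_deriv)
  define u where "u = (if A = 0 then 1 else A / of_real (norm A))"
  define \<epsilon> where "\<epsilon> = (if B = 0 then 1 else u * cnj B / of_real (norm B))"
  have nu: "norm u = 1" by (simp add: u_def norm_divide)
  have ne: "norm \<epsilon> = 1" by (simp add: \<epsilon>_def norm_mult norm_divide nu)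
  have Au: "A = of_real (norm A) * u"
  proof (cases "A = 0")
    case False
    then have "complex_of_real (norm A) \<noteq> 0" by simp
    then show ?thesis using False by (simp add: u_def)
  qed (simp add: u_def)
  have Bu: "\<epsilon> * B = of_real (norm B) * u"
  proof (cases "B = 0")
    case False
    have sq0: "complex_of_real (norm B) * complex_of_real (norm B) = B * cnj B"
      using complex_norm_square[of B] by (simp only: power2_eq_square of_real_mult)
    have sq: "cnj B * B = of_real (norm B) * of_real (norm B)"
      by (subst mult.commute) (rule sq0[symmetric])
    have nz: "complex_of_real (norm B) \<noteq> 0" using False by simp
    have "\<epsilon> * B = u * (cnj B * B) / of_real (norm B)" using False by (simp add: \<epsilon>_def)
    also have "\<dots> = of_real (norm B) * u" unfolding sq using nz by simp
    finally show ?thesis .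
  qed (simp add: \<epsilon>_def)
  have sumAB: "norm (A + \<epsilon> * B) = norm A + norm B"
  proof -
    have "A + \<epsilon> * B = of_real (norm A + norm B) * u" by (simp add: ring_distribs Au[symmetric] Bu)
    then have "norm (A + \<epsilon> * B) = \<bar>norm A + norm B\<bar>"
      by (simp only: norm_mult nu norm_of_real mult_1_right)
    then show ?thesis by simp
  qed
  define F where "F = (\<lambda>z. (deriv h z + of_real \<alpha> * z * deriv (deriv h) z) + \<epsilon> * (deriv g z + of_real \<alpha> * z * deriv (deriv g) z))"
  have holF: "F holomorphic_on ball 0 1"
    unfolding F_def by (intro holomorphic_intros dh)
  have posF: "Re (F z) > \<beta>" if z: "z \<in> ball 0 1" for z
  proof -
    have "Re (\<epsilon> * (deriv g z + of_real \<alpha> * z * deriv (deriv g) z)) \<ge> - norm (\<epsilon> * (deriv g z + of_real \<alpha> * z * deriv (deriv g) z))"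
      using abs_Re_le_cmod[of "\<epsilon> * (deriv g z + of_real \<alpha> * z * deriv (deriv g) z)"] by linarith
    also have "norm (\<epsilon> * (deriv g z + of_real \<alpha> * z * deriv (deriv g) z)) = norm (deriv g z + of_real \<alpha> * z * deriv (deriv g) z)"
      by (simp add: norm_mult ne)
    finally show ?thesis using cond[OF z] by (simp add: F_def)
  qed
  have F0: "F 0 = 1" by (simp add: F_def h0)
  have bound: "norm ((deriv ^^ k) F 0 / fact k) \<le> 2 * (1 - \<beta>)"
    using carath[OF holF posF, of k] F0 by (simp add: k_def)
  have hA: "h has_fps_expansion Abs_fps a" by (rule fps_exp[OF assms(5)])
  have hB: "g has_fps_expansion Abs_fps b" by (rule fps_exp[OF assms(6)])
  define FA where "FA = (fps_deriv (Abs_fps a) + (fps_const (of_real \<alpha>) * fps_X) * fps_deriv (fps_deriv (Abs_fps a)))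
     + fps_const \<epsilon> * (fps_deriv (Abs_fps b) + (fps_const (of_real \<alpha>) * fps_X) * fps_deriv (fps_deriv (Abs_fps b)))"
  have "F has_fps_expansion FA"
    unfolding F_def FA_def by (intro fps_expansion_intros hA hB)
  from fps_nth_fps_expansion[OF this, of k]
  have "fps_nth FA k = (deriv ^^ k) F 0 / fact k" .
  moreover have "fps_nth FA k = of_real (real n * (1 + \<alpha> * (real n - 1))) * (A + \<epsilon> * B)"
    by (simp add: FA_def k_def n A_def B_def fps_deriv_nth mult.assoc algebra_simps)
  ultimately have "norm (of_real (real n * (1 + \<alpha> * (real n - 1))) * (A + \<epsilon> * B)) \<le> 2 * (1 - \<beta>)"
    using bound by simp
  moreover have spos: "real n * (1 + \<alpha> * (real n - 1)) > 0"
    using assms(1) n by (intro mult_pos_pos) (simp_all add: add_pos_nonneg)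
  ultimately have "real n * (1 + \<alpha> * (real n - 1)) * (norm A + norm B) \<le> 2 * (1 - \<beta>)"
    by (simp only: norm_mult norm_of_real sumAB abs_of_pos)
  then have main: "norm A + norm B \<le> 2 * (1 - \<beta>) / (real n * (1 + \<alpha> * (real n - 1)))"
    using spos by (simp add: pos_le_divide_eq mult.commute)
  show "cmod (a n) + cmod (b n) \<le> 2 * (1 - \<beta>) / (real n * (1 + \<alpha> * (real n - 1))) \<and>
      \<bar>cmod (a n) - cmod (b n)\<bar> \<le> 2 * (1 - \<beta>) / (real n * (1 + \<alpha> * (real n - 1))) \<and>
      cmod (a n) \<le> 2 * (1 - \<beta>) / (real n * (1 + \<alpha> * (real n - 1)))"
    using main norm_ge_zero[of A] norm_ge_zero[of B] unfolding A_def B_def by linarith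
qed

end
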